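(* Let $p<q$ be odd primes. Then $n=pq$ is a Gaussian Carmichael number if and only if $q=p+2$ and $8$ divides $p+q$.
   Context: The function $\mathcal{F}$ is defined by $\mathcal{F}(n)=n-1$ if $n\equiv 1\pmod 4$, $\mathcal{F}(n)=n+1$ if $n\equiv 3 \pmod 4$, $\mathcal{F}(n)=n$ otherwise. A composite integer $n$ is a Gaussian Fermat pseudoprime to base $z\in\mathbb{Z}[i]$ if $\gcd(n,z\overline{z})=1$ and $(z/\overline{z})^{\mathcal{F}(n)}\equiv 1\pmod n$ in $\mathbb{Z}[i]/n\mathbb{Z}[i]$. A composite $n$ is a Gaussian Carmichael number if it is a Gaussian Fermat pseudoprime to base $z$ for every $z\in\mathbb{Z}[i]$ with $\gcd(n,z\overline{z})=1$. *)

theory Defs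
  imports "HOL-Computational_Algebra.Primes"
begin

text \<open>Gaussian integers a + b i represented as pairs (a, b) of integers.\<close>
type_synonym gint = "int \<times> int"

definition gmul :: "gint \<Rightarrow> gint \<Rightarrow> gint" where
  "gmul z w = (fst z * fst w - snd z * snd w, fst z * snd w + snd z * fst w)"

definition gconj :: "gint \<Rightarrow> gint" where
  "gconj z = (fst z, - snd z)"

definition gone :: gint where "gone = (1, 0)"

fun gpow :: "gint \<Rightarrow> nat \<Rightarrow> gint" where
  "gpow z 0 = gone"
| "gpow z (Suc k) = gmul z (gpow z k)"

definition gnorm :: "gint \<Rightarrow> int" where
  "gnorm z = fst z ^ 2 + snd z ^ 2"

definition gcong :: "nat \<Rightarrow> gint \<Rightarrow> gint \<Rightarrow> bool" where
  "gcong n z w \<longleftrightarrow> int n dvd fst z - fst w \<and> int n dvd snd z - snd w"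

definition F :: "nat \<Rightarrow> nat" where
  "F n = (if n mod 4 = 1 then n - 1 else if n mod 4 = 3 then n + 1 else n)"

definition composite :: "nat \<Rightarrow> bool" where
  "composite n \<longleftrightarrow> n > 1 \<and> \<not> prime n"

text \<open>(z / conj z)^F(n) = 1 in Z[i]/nZ[i]: u is the inverse of conj z modulo n.\<close>
definition gauss_fermat_psp :: "nat \<Rightarrow> gint \<Rightarrow> bool" where
  "gauss_fermat_psp n z \<longleftrightarrow> composite n \<and> coprime (int n) (gnorm z) \<and>
     (\<exists>u. gcong n (gmul u (gconj z)) gone \<and> gcong n (gpow (gmul z u) (F n)) gone)"

definition gauss_carmichael :: "nat \<Rightarrow> bool" where
  "gauss_carmichael n \<longleftrightarrow> composite n \<and>
     (\<forall>z. coprime (int n) (gnorm z) \<longrightarrow> gauss_fermat_psp n z)"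

end

theory Submission
  imports Defs "HOL-Number_Theory.Number_Theory" "HOL-Algebra.Multiplicative_Group"
begin

datatype gi = G (re: int) (im: int)

instantiation gi :: comm_ring_1
begin
definition "zero_gi = G 0 0"
definition "one_gi = G 1 0"
definition "plus_gi x y = G (re x + re y) (im x + im y)"
definition "minus_gi x y = G (re x - re y) (im x - im y)"
definition "uminus_gi x = G (- re x) (- im x)"
definition "times_gi x y = G (re x * re y - im x * im y) (re x * im y + im x * re y)"
instance
  by intro_classes (auto simp: zero_gi_def one_gi_def plus_gi_def minus_gi_def uminus_gi_def
        times_gi_def algebra_simps)
end

lemma gi_simps [simp]:
  "re 0 = 0" "im 0 = 0" "re 1 = 1" "im 1 = 0"
  "re (x + y) = re x + re y" "im (x + y) = im x + im y"
  "re (x - y) = re x - re y" "im (x - y) = im x - im y"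
  "re (- x) = - re x" "im (- x) = - im x"
  "re (x * y) = re x * re y - im x * im y" "im (x * y) = re x * im y + im x * re y"
  by (simp_all add: zero_gi_def one_gi_def plus_gi_def minus_gi_def uminus_gi_def times_gi_def)

lemma gi_eqI: "re x = re y \<Longrightarrow> im x = im y \<Longrightarrow> x = y"
  by (cases x, cases y) auto

lemma of_nat_gi: "(of_nat n :: gi) = G (int n) 0"
  by (induction n) (auto intro: gi_eqI)

lemma of_int_gi: "(of_int k :: gi) = G k 0"
  by (cases k rule: int_cases) (auto simp: of_nat_gi intro: gi_eqI)

lemma re_of_int [simp]: "re (of_int k) = k" and im_of_int [simp]: "im (of_int k) = 0"
  by (simp_all add: of_int_gi)
lemma re_of_nat [simp]: "re (of_nat k) = int k" and im_of_nat [simp]: "im (of_nat k) = 0"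
  by (simp_all add: of_nat_gi)

lemma dvd_gi_iff: "(of_nat n :: gi) dvd x \<longleftrightarrow> int n dvd re x \<and> int n dvd im x"
proof
  assume "of_nat n dvd x" then obtain c where "x = of_nat n * c" by (auto elim: dvdE)
  then show "int n dvd re x \<and> int n dvd im x" by simp
next
  assume "int n dvd re x \<and> int n dvd im x"
  then obtain a b where "re x = int n * a" "im x = int n * b" by (auto elim!: dvdE)
  then have "x = of_nat n * G a b" by (intro gi_eqI) auto
  then show "of_nat n dvd x" by simp
qed

definition toG :: "gint \<Rightarrow> gi" where "toG z = G (fst z) (snd z)"

definition cnj :: "gi \<Rightarrow> gi" where "cnj x = G (re x) (- im x)"
definition nrm :: "gi \<Rightarrow> int" where "nrm x = re x ^ 2 + im x ^ 2"

lemma toG_mul: "toG (gmul z w) = toG z * toG w"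
  by (auto simp: toG_def gmul_def intro: gi_eqI)
lemma toG_one: "toG gone = 1"
  by (auto simp: toG_def gone_def intro: gi_eqI)
lemma toG_pow: "toG (gpow z k) = toG z ^ k"
  by (induction k) (auto simp: toG_mul toG_one)
lemma toG_conj: "toG (gconj z) = cnj (toG z)"
  by (auto simp: toG_def gconj_def cnj_def)
lemma toG_norm: "gnorm z = nrm (toG z)"
  by (auto simp: toG_def gnorm_def nrm_def)
lemma toG_inv: "toG (re x, im x) = x" by (cases x) (auto simp: toG_def)

definition gc :: "nat \<Rightarrow> gi \<Rightarrow> gi \<Rightarrow> bool" where "gc n x y \<longleftrightarrow> (of_nat n :: gi) dvd x - y"

lemma gcong_gc: "gcong n z w \<longleftrightarrow> gc n (toG z) (toG w)"
  by (simp add: gcong_def gc_def dvd_gi_iff toG_def)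

lemma gc_refl [simp]: "gc n x x" by (simp add: gc_def)
lemma gc_sym: "gc n x y \<Longrightarrow> gc n y x"
  unfolding gc_def by (metis dvd_minus_iff minus_diff_eq)
lemma gc_trans: "gc n x y \<Longrightarrow> gc n y z \<Longrightarrow> gc n x z"
  unfolding gc_def by (metis diff_add_cancel add_diff_eq dvd_add)
lemma gc_mult: "gc n x y \<Longrightarrow> gc n x' y' \<Longrightarrow> gc n (x * x') (y * y')"
proof -
  assume a: "gc n x y" "gc n x' y'"
  have "x * x' - y * y' = (x - y) * x' + y * (x' - y')" by (simp add: algebra_simps)
  then show ?thesis using a unfolding gc_def by (metis dvd_add dvd_mult dvd_mult2)
qed
lemma gc_add: "gc n x y \<Longrightarrow> gc n x' y' \<Longrightarrow> gc n (x + x') (y + y')"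
proof -
  assume a: "gc n x y" "gc n x' y'"
  have "x + x' - (y + y') = (x - y) + (x' - y')" by (simp add: algebra_simps)
  then show ?thesis using a unfolding gc_def by (metis dvd_add)
qed
lemma gc_pow: "gc n x y \<Longrightarrow> gc n (x ^ k) (y ^ k)"
  by (induction k) (auto intro: gc_mult)
lemma gc_dvd: "m dvd n \<Longrightarrow> gc n x y \<Longrightarrow> gc m x y"
  unfolding gc_def by (metis dvd_trans of_nat_mult dvdE dvd_triv_left)


lemma cnj_mult: "cnj (x * y) = cnj x * cnj y" by (auto simp: cnj_def intro: gi_eqI)
lemma cnj_one [simp]: "cnj 1 = 1" by (auto simp: cnj_def intro: gi_eqI)
lemma cnj_pow: "cnj (x ^ k) = cnj x ^ k" by (induction k) (auto simp: cnj_mult)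
lemma cnj_cnj [simp]: "cnj (cnj x) = x" by (auto simp: cnj_def intro: gi_eqI)
lemma mult_cnj: "x * cnj x = of_int (nrm x)"
  by (auto simp: cnj_def nrm_def power2_eq_square intro: gi_eqI)
lemma nrm_mult: "nrm (x * y) = nrm x * nrm y"
  by (simp add: nrm_def power2_eq_square algebra_simps)
lemma nrm_cnj [simp]: "nrm (cnj x) = nrm x" by (simp add: nrm_def cnj_def)
lemma nrm_one [simp]: "nrm 1 = 1" by (simp add: nrm_def)

lemma gc_of_int: "gc n (of_int a) (of_int b) \<longleftrightarrow> [a = b] (mod int n)"
  by (simp add: gc_def dvd_gi_iff cong_iff_dvd_diff)

lemma gc_cnj: "gc n x y \<Longrightarrow> gc n (cnj x) (cnj y)"
  by (simp add: gc_def dvd_gi_iff cnj_def) (metis dvd_minus_iff minus_diff_eq diff_minus_eq_add add.commute diff_conv_add_uminus)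

lemma gc_nrm: "gc n x y \<Longrightarrow> [nrm x = nrm y] (mod int n)"
proof -
  assume "gc n x y"
  then have "gc n (x * cnj x) (y * cnj y)" by (intro gc_mult gc_cnj)
  then show ?thesis by (simp add: mult_cnj gc_of_int)
qed

lemma freshman:
  assumes "prime p"
  shows "gc p ((x + y) ^ p) (x ^ p + y ^ p)"
proof -
  obtain m where pm: "p = Suc m" using assms by (cases p) auto
  define f where "f k = of_nat (p choose k) * x ^ k * y ^ (p - k)" for k
  have "(x + y) ^ p = (\<Sum>k\<le>p. f k)" by (simp add: binomial_ring f_def)
  also have "\<dots> = f 0 + (\<Sum>i<m. f (Suc i)) + f (Suc m)"
    unfolding pm by (simp add: sum.atMost_shift)
  also have "f 0 = y ^ p" by (simp add: f_def)
  also have "f (Suc m) = x ^ p" by (simp add: f_def pm)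
  finally have eq: "(x + y) ^ p - (x ^ p + y ^ p) = (\<Sum>i<m. f (Suc i))" by simp
  have "of_nat p dvd f (Suc i)" if "i < m" for i
  proof -
    have "p dvd (p choose Suc i)" using that pm assms by (intro dvd_choose_prime) auto
    then obtain c where "p choose Suc i = p * c" by (auto elim: dvdE)
    then show ?thesis by (simp add: f_def)
  qed
  then have "of_nat p dvd (\<Sum>i<m. f (Suc i))" by (intro dvd_sum) auto
  then show ?thesis unfolding gc_def eq .
qed

lemma fermat_gi_nat:
  assumes "prime p"
  shows "gc p (of_nat b ^ p) (of_nat b)"
proof (induction b)
  case 0 then show ?case using assms by (simp add: zero_power prime_gt_0_nat)
next
  case (Suc b)
  have "gc p ((of_nat b + 1) ^ p) (of_nat b ^ p + 1 ^ p)" by (rule freshman[OF assms])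
  moreover have "gc p (of_nat b ^ p + 1 ^ p) (of_nat b + 1)" using Suc by (simp add: gc_add)
  ultimately show ?case by (auto intro: gc_trans simp: add.commute)
qed

lemma fermat_gi_int:
  assumes "prime p"
  shows "gc p (of_int a ^ p) (of_int a)"
proof -
  have p0: "int p > 0" using assms prime_gt_0_nat by auto
  define b where "b = nat (a mod int p)"
  have ab: "gc p (of_int a) (of_nat b)"
    using p0 by (simp add: gc_def dvd_gi_iff b_def mod_eq_0_iff_dvd[symmetric] mod_diff_left_eq[symmetric])
  have "gc p (of_int a ^ p) (of_nat b ^ p)" using ab by (rule gc_pow)
  moreover have "gc p (of_nat b ^ p) (of_nat b)" by (rule fermat_gi_nat[OF assms])
  ultimately show ?thesis using ab by (meson gc_trans gc_sym)
qed

definition ii :: gi where "ii = G 0 1"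
lemma ii_sq: "ii ^ 2 = -1" by (auto simp: ii_def power2_eq_square intro: gi_eqI)
lemma gi_decomp: "x = of_int (re x) + of_int (im x) * ii"
  by (auto simp: ii_def intro: gi_eqI)

lemma ii_pow_odd: "ii ^ (4 * k + 1) = ii" "ii ^ (4 * k + 3) = - ii"
proof -
  have "ii ^ 4 = 1" using ii_sq by (metis power_mult numeral_Bit0 mult_2 neg_one_even_power even_numeral power2_eq_square power_mult mult.commute)
  then have "ii ^ (4 * k) = 1" by (simp add: power_mult)
  then show "ii ^ (4 * k + 1) = ii" "ii ^ (4 * k + 3) = - ii"
    by (simp_all add: power_add ii_sq power3_eq_cube power2_eq_square[symmetric] mult.assoc[symmetric])
qed

lemma frobenius:
  assumes "prime p" "odd p"
  shows "p mod 4 = 1 \<Longrightarrow> gc p (x ^ p) x" and "p mod 4 = 3 \<Longrightarrow> gc p (x ^ p) (cnj x)"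
proof -
  define a b where "a = re x" and "b = im x"
  have x: "x = of_int a + of_int b * ii" unfolding a_def b_def by (rule gi_decomp)
  have 1: "gc p (x ^ p) (of_int a ^ p + of_int b ^ p * ii ^ p)"
    unfolding x power_mult_distrib[symmetric] by (rule freshman[OF assms(1)])
  have 2: "gc p (of_int a ^ p + of_int b ^ p * ii ^ p) (of_int a + of_int b * ii ^ p)"
    by (intro gc_add gc_mult fermat_gi_int assms gc_refl)
  have 3: "gc p (x ^ p) (of_int a + of_int b * ii ^ p)" using 1 2 by (rule gc_trans)
  show "p mod 4 = 1 \<Longrightarrow> gc p (x ^ p) x"
  proof -
    assume "p mod 4 = 1"
    then have "p = 4 * (p div 4) + 1" by presburger
    then have "ii ^ p = ii" by (metis ii_pow_odd(1))
    then show ?thesis using 3 x by simp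
  qed
  show "p mod 4 = 3 \<Longrightarrow> gc p (x ^ p) (cnj x)"
  proof -
    assume "p mod 4 = 3"
    then have "p = 4 * (p div 4) + 3" by presburger
    then have "ii ^ p = - ii" by (metis ii_pow_odd(2))
    moreover have "cnj x = of_int a + of_int b * (- ii)"
      by (auto simp: cnj_def a_def b_def ii_def intro: gi_eqI)
    ultimately show ?thesis using 3 by simp
  qed
qed


lemma gc_crt:
  assumes "coprime p q" "gc p x y" "gc q x y"
  shows "gc (p * q) x y"
proof -
  have c: "coprime (int p) (int q)" using assms(1) by simp
  from assms(2,3) have h: "int p dvd re (x - y)" "int q dvd re (x - y)"
    "int p dvd im (x - y)" "int q dvd im (x - y)" unfolding gc_def dvd_gi_iff by auto
  have "int p * int q dvd re (x - y)" by (rule divides_mult[OF h(1,2) c])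
  moreover have "int p * int q dvd im (x - y)" by (rule divides_mult[OF h(3,4) c])
  ultimately show ?thesis unfolding gc_def dvd_gi_iff by simp
qed

lemma gc_one_mult: "gc n x 1 \<Longrightarrow> gc n y 1 \<Longrightarrow> gc n (x * y) 1"
  using gc_mult[of n x 1 y 1] by simp

lemma gc_one_pow: "gc n x 1 \<Longrightarrow> gc n (x ^ k) 1"
  using gc_pow[of n x 1 k] by simp

lemma suff_core:
  assumes p: "prime p" "p mod 4 = 3" and q: "prime q" "q = p + 2"
    and cop: "coprime (int (p * q)) (nrm Z)"
  shows "\<exists>U. gc (p * q) (U * cnj Z) 1 \<and> gc (p * q) ((Z * U) ^ ((p + 1) ^ 2)) 1"
proof -
  let ?n = "p * q"
  have oddp: "odd p" using p(2) by presburger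
  have oddq: "odd q" using oddp q(2) by simp
  have q4: "q mod 4 = 1" using p(2) q(2) by presburger
  obtain t where t: "[nrm Z * t = 1] (mod int ?n)"
    using cong_solve_coprime_int[of "nrm Z" "int ?n"] cop by (auto simp: coprime_commute)
  define U where "U = of_int t * Z"
  have U1: "gc ?n (U * cnj Z) 1"
  proof -
    have "U * cnj Z = of_int (nrm Z * t)" by (simp add: U_def mult_cnj[symmetric] algebra_simps)
    moreover have "gc ?n (of_int (nrm Z * t)) (of_int 1)" using t unfolding gc_of_int .
    ultimately show ?thesis by simp
  qed
  define W where "W = Z * U"
  have WW: "gc ?n (W * cnj W) 1"
  proof -
    have "W * cnj W = (U * cnj Z) * cnj (U * cnj Z)" by (simp add: W_def cnj_mult algebra_simps)
    moreover have "gc ?n (cnj (U * cnj Z)) 1" using gc_cnj[OF U1] by simp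
    ultimately show ?thesis using U1 by (simp add: gc_one_mult)
  qed
  have WWp: "gc p (W * cnj W) 1" using gc_dvd[OF _ WW, of p] by simp
  have WWq: "gc q (W * cnj W) 1" using gc_dvd[OF _ WW, of q] by simp
  have modp: "gc p (W ^ (p + 1)) 1"
  proof -
    have "gc p (W ^ p * W) (cnj W * W)" using frobenius(2)[OF p(1) oddp p(2)] by (intro gc_mult) auto
    then have "gc p (W ^ (p + 1)) (W * cnj W)" by (simp add: mult.commute power_Suc2)
    then show ?thesis using WWp by (rule gc_trans)
  qed
  have modq: "gc q (W ^ (p + 1)) 1"
  proof -
    have e: "p + 1 = q - 1" using q(2) by simp
    have Wq: "gc q (W ^ q) W" using frobenius(1)[OF q(1) oddq q4] .
    obtain k where k: "q = Suc k" using q(2) by auto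
    have eq: "W ^ (q - 1) * (W * cnj W) = W ^ q * cnj W"
      unfolding k by (simp add: power_Suc2 mult.assoc)
    have "gc q (W ^ (q - 1) * (W * cnj W)) (W ^ (q - 1) * 1)" by (intro gc_mult gc_refl WWq)
    then have a: "gc q (W ^ (q - 1)) (W ^ (q - 1) * (W * cnj W))" by (simp add: gc_sym)
    have b: "gc q (W ^ q * cnj W) (W * cnj W)" using Wq by (intro gc_mult) auto
    have "gc q (W ^ (q - 1)) 1" using gc_trans[OF gc_trans[OF a[unfolded eq] b] WWq] .
    then show ?thesis unfolding e .
  qed
  have cpq: "coprime p q" using p(1) q(1) by (simp add: primes_coprime q(2))
  have "gc ?n (W ^ (p + 1)) 1" by (rule gc_crt[OF cpq modp modq])
  then have "gc ?n ((W ^ (p + 1)) ^ (p + 1)) 1" by (rule gc_one_pow)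
  moreover have "(W ^ (p + 1)) ^ (p + 1) = W ^ ((p + 1) ^ 2)" by (simp only: power_mult[symmetric] power2_eq_square)
  ultimately have "gc ?n (W ^ ((p + 1) ^ 2)) 1" by simp
  then show ?thesis using U1 unfolding W_def by blast
qed


lemma minus_one_QR:
  assumes r: "prime r" "odd r"
  shows "(\<exists>c. [c ^ 2 = -1] (mod int r)) \<longleftrightarrow> r mod 4 = 1"
proof -
  have r2: "2 < r" using r prime_gt_1_nat[OF r(1)] by (cases "r = 2") auto
  have E: "[Legendre (-1) (int r) = (-1) ^ ((r - 1) div 2)] (mod int r)"
    using euler_criterion[OF r(1) r2] by simp
  have n0: "\<not> [-1 = 0] (mod int r)" using r2 by (simp add: cong_iff_dvd_diff zdvd_not_zless)
  have n1: "\<not> [-1 = 1] (mod int r)"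
  proof
    assume "[-1 = 1] (mod int r)"
    then have "int r dvd 2" by (simp add: cong_iff_dvd_diff dvd_diff_commute)
    then have "int r \<le> 2" by (rule zdvd_imp_le) simp
    then show False using r2 by simp
  qed
  have L: "Legendre (-1) (int r) = (if QuadRes (int r) (-1) then 1 else -1)"
    using n0 by (simp add: Legendre_def)
  show ?thesis
  proof (cases "r mod 4 = 1")
    case True
    then have "even ((r - 1) div 2)" by presburger
    then have "[Legendre (-1) (int r) = 1] (mod int r)" using E by simp
    then have "QuadRes (int r) (-1)" using L n1 by (cases "QuadRes (int r) (-1)") auto
    then show ?thesis using True by (simp add: QuadRes_def)
  next
    case False
    then have "odd ((r - 1) div 2)" using r(2) by presburger
    then have "[Legendre (-1) (int r) = -1] (mod int r)" using E by simp
    then have "\<not> QuadRes (int r) (-1)" using L n1 by (cases "QuadRes (int r) (-1)") (auto simp: cong_sym)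
    then show ?thesis using False by (simp add: QuadRes_def)
  qed
qed


definition gphi :: "int \<Rightarrow> gi \<Rightarrow> int" where "gphi c x = re x + im x * c"

lemma gphi_mult:
  assumes c: "[c ^ 2 = -1] (mod int r)"
  shows "[gphi c (x * y) = gphi c x * gphi c y] (mod int r)"
proof -
  have e: "gphi c x * gphi c y = gphi c (x * y) + im x * im y * (c ^ 2 + 1)"
    by (simp add: gphi_def algebra_simps power2_eq_square)
  have c1: "[c ^ 2 + 1 = 0] (mod int r)" using cong_add[OF c cong_refl[of 1]] by simp
  have "[im x * im y * (c ^ 2 + 1) = im x * im y * 0] (mod int r)" by (rule cong_mult[OF cong_refl c1])
  then have "[gphi c (x * y) + im x * im y * (c ^ 2 + 1) = gphi c (x * y) + 0] (mod int r)"
    by (intro cong_add cong_refl) simp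
  then show ?thesis unfolding e by (simp add: cong_sym_eq)
qed

lemma gphi_one [simp]: "gphi c 1 = 1" by (simp add: gphi_def)

lemma gphi_pow:
  assumes c: "[c ^ 2 = -1] (mod int r)"
  shows "[gphi c (x ^ m) = gphi c x ^ m] (mod int r)"
proof (induction m)
  case 0 then show ?case by simp
next
  case (Suc m)
  have "[gphi c (x * x ^ m) = gphi c x * gphi c (x ^ m)] (mod int r)" by (rule gphi_mult[OF c])
  also have "[gphi c x * gphi c (x ^ m) = gphi c x * gphi c x ^ m] (mod int r)"
    using Suc by (intro cong_mult cong_refl)
  finally show ?case by simp
qed

lemma gphi_gc: "gc r x y \<Longrightarrow> [gphi c x = gphi c y] (mod int r)"
proof -
  assume "gc r x y"
  then have h: "int r dvd re (x - y)" "int r dvd im (x - y)" unfolding gc_def dvd_gi_iff by auto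
  have "gphi c x - gphi c y = re (x - y) + im (x - y) * c" by (simp add: gphi_def algebra_simps)
  then show ?thesis unfolding cong_iff_dvd_diff using h by (simp add: dvd_add dvd_mult2)
qed

lemma key1:
  assumes r: "prime r" "r mod 4 = 1"
  shows "\<exists>Z. coprime (int r) (nrm Z) \<and>
     (\<forall>U m. gc r (U * cnj Z) 1 \<longrightarrow> gc r ((Z * U) ^ m) 1 \<longrightarrow> (r - 1) dvd m)"
proof -
  have oddr: "odd r" using r(2) by presburger
  obtain c where c: "[c ^ 2 = -1] (mod int r)" using minus_one_QR[OF r(1) oddr] r(2) by auto
  obtain g where g: "residue_primroot r g" using prime_primitive_root_exists[of r] r(1) prime_gt_1_nat by auto
  have gord: "ord r g = r - 1" and gcop: "coprime r g"
    using g r(1) by (auto simp: residue_primroot_def totient_prime)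
  define h :: int where "h = (int r + 1) div 2"
  have h2: "2 * h = int r + 1" unfolding h_def using oddr by presburger
  have h2c: "[2 * h = 1] (mod int r)" unfolding h2 by (simp add: cong_iff_dvd_diff)
  define a where "a = h * (int g + 1)"
  define b where "b = - h * (int g - 1) * c"
  define Z where "Z = G a b"
  let ?gphi = "gphi c"
  have c2: "[c * c = -1] (mod int r)" using c by (simp add: power2_eq_square)
  have phiZ: "[?gphi Z = int g] (mod int r)"
  proof -
    have "?gphi Z = h * (int g + 1) - h * (int g - 1) * (c * c)"
      unfolding gphi_def Z_def a_def b_def by (simp add: algebra_simps)
    also have "[\<dots> = h * (int g + 1) - h * (int g - 1) * (-1)] (mod int r)"
      by (intro cong_diff cong_refl cong_mult c2)
    also have "h * (int g + 1) - h * (int g - 1) * (-1) = (2 * h) * int g" by (simp add: algebra_simps)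
    also have "[\<dots> = 1 * int g] (mod int r)" by (intro cong_mult h2c cong_refl)
    finally show ?thesis by simp
  qed
  have phicZ: "[?gphi (cnj Z) = 1] (mod int r)"
  proof -
    have "?gphi (cnj Z) = h * (int g + 1) + h * (int g - 1) * (c * c)"
      unfolding gphi_def Z_def a_def b_def cnj_def by (simp add: algebra_simps)
    also have "[\<dots> = h * (int g + 1) + h * (int g - 1) * (-1)] (mod int r)"
      by (intro cong_add cong_refl cong_mult c2)
    also have "h * (int g + 1) + h * (int g - 1) * (-1) = 2 * h" by (simp add: algebra_simps)
    finally show ?thesis using h2c by (rule cong_trans)
  qed
  have nZ: "[nrm Z = int g] (mod int r)"
  proof -
    have "nrm Z = ?gphi (Z * cnj Z)" by (simp add: mult_cnj gphi_def)
    also have "[\<dots> = ?gphi Z * ?gphi (cnj Z)] (mod int r)" by (rule gphi_mult[OF c])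
    also have "[?gphi Z * ?gphi (cnj Z) = int g * 1] (mod int r)" by (intro cong_mult phiZ phicZ)
    finally show ?thesis by simp
  qed
  have cop: "coprime (int r) (nrm Z)"
  proof -
    have "coprime (int g) (int r)" using gcop by (simp add: coprime_commute)
    then have "coprime (nrm Z) (int r)" using cong_imp_coprime[OF cong_sym[OF nZ]] by blast
    then show ?thesis by (simp add: coprime_commute)
  qed
  have "(r - 1) dvd m" if U1: "gc r (U * cnj Z) 1" and W1: "gc r ((Z * U) ^ m) 1" for U m
  proof -
    have "[?gphi (U * cnj Z) = ?gphi 1] (mod int r)" using gphi_gc[OF U1, of c] .
    moreover have "[?gphi (U * cnj Z) = ?gphi U * 1] (mod int r)"
      using cong_trans[OF gphi_mult[OF c] cong_mult[OF cong_refl phicZ]] .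
    ultimately have phiU: "[?gphi U = 1] (mod int r)" by (metis cong_sym_eq cong_trans gphi_one mult_1_right)
    have "[?gphi ((Z * U) ^ m) = ?gphi (Z * U) ^ m] (mod int r)" by (rule gphi_pow[OF c])
    also have "[?gphi (Z * U) ^ m = (int g * 1) ^ m] (mod int r)"
      by (intro cong_pow cong_trans[OF gphi_mult[OF c] cong_mult[OF phiZ phiU]])
    finally have "[?gphi ((Z * U) ^ m) = int g ^ m] (mod int r)" by simp
    then have "[int g ^ m = ?gphi ((Z * U) ^ m)] (mod int r)" by (simp add: cong_sym_eq)
    then have "[int g ^ m = 1] (mod int r)"
      using gphi_gc[OF W1, of c] gphi_one cong_trans by metis
    then have "[int (g ^ m) = int 1] (mod int r)" by simp
    then have "[g ^ m = 1] (mod r)" by (simp only: cong_int_iff)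
    then show ?thesis using ord_divides[of g m r] gord by simp
  qed
  then show ?thesis using cop by blast
qed


definition red :: "nat \<Rightarrow> gi \<Rightarrow> gi" where "red r x = G (re x mod int r) (im x mod int r)"

lemma dvd_mod_diff: "(m::int) dvd (a mod m - a)"
  using mod_eq_dvd_iff[of "a mod m" m a] by simp

lemma gc_red: "gc r (red r x) x"
  unfolding gc_def dvd_gi_iff red_def using dvd_mod_diff by simp

lemma red_eq_iff: "red r x = red r y \<longleftrightarrow> gc r x y"
  unfolding gc_def dvd_gi_iff red_def gi.inject mod_eq_dvd_iff by simp

lemma red_gc: "gc r x y \<Longrightarrow> red r x = red r y" by (simp add: red_eq_iff)

lemma red_red [simp]: "red r (red r x) = red r x"
  by (rule red_gc[OF gc_red])
lemma red_mult_left [simp]: "red r (red r x * y) = red r (x * y)"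
  by (intro red_gc gc_mult gc_red gc_refl)
lemma red_mult_right [simp]: "red r (x * red r y) = red r (x * y)"
  by (intro red_gc gc_mult gc_red gc_refl)
lemma red_add_left [simp]: "red r (red r x + y) = red r (x + y)"
  by (intro red_gc gc_add gc_red gc_refl)
lemma red_add_right [simp]: "red r (x + red r y) = red r (x + y)"
  by (intro red_gc gc_add gc_red gc_refl)
lemma red_zero [simp]: "red r 0 = 0" by (simp add: red_def zero_gi_def)

definition GF :: "nat \<Rightarrow> gi ring" where
  "GF r = \<lparr>carrier = range (red r), monoid.mult = \<lambda>x y. red r (x * y), one = red r 1,
           zero = 0, add = \<lambda>x y. red r (x + y)\<rparr>"

lemma GF_simps [simp]: "carrier (GF r) = range (red r)" "x \<otimes>\<^bsub>GF r\<^esub> y = red r (x * y)"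
  "\<one>\<^bsub>GF r\<^esub> = red r 1" "\<zero>\<^bsub>GF r\<^esub> = 0" "x \<oplus>\<^bsub>GF r\<^esub> y = red r (x + y)"
  by (simp_all add: GF_def)

lemma GF_cring: "cring (GF r)"
proof (rule cringI)
  show "abelian_group (GF r)"
  proof (rule abelian_groupI)
    fix x assume "x \<in> carrier (GF r)"
    then obtain x' where x: "x = red r x'" by auto
    show "\<exists>y\<in>carrier (GF r). y \<oplus>\<^bsub>GF r\<^esub> x = \<zero>\<^bsub>GF r\<^esub>"
      by (rule bexI[of _ "red r (- x')"]) (auto simp: x)
  next
    fix x y z assume "x \<in> carrier (GF r)" "y \<in> carrier (GF r)" "z \<in> carrier (GF r)"
    show "x \<oplus>\<^bsub>GF r\<^esub> y \<oplus>\<^bsub>GF r\<^esub> z = x \<oplus>\<^bsub>GF r\<^esub> (y \<oplus>\<^bsub>GF r\<^esub> z)"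
      by (simp add: add.assoc)
  next
    fix x y assume "x \<in> carrier (GF r)" "y \<in> carrier (GF r)"
    show "x \<oplus>\<^bsub>GF r\<^esub> y = y \<oplus>\<^bsub>GF r\<^esub> x" by (simp add: add.commute)
  next
    fix x assume "x \<in> carrier (GF r)"
    then show "\<zero>\<^bsub>GF r\<^esub> \<oplus>\<^bsub>GF r\<^esub> x = x" by auto
  next
    show "\<zero>\<^bsub>GF r\<^esub> \<in> carrier (GF r)" by (simp add: image_iff) (metis red_zero)
  qed auto
  show "comm_monoid (GF r)"
  proof (rule comm_monoidI)
    fix x y z assume "x \<in> carrier (GF r)" "y \<in> carrier (GF r)" "z \<in> carrier (GF r)"
    show "x \<otimes>\<^bsub>GF r\<^esub> y \<otimes>\<^bsub>GF r\<^esub> z = x \<otimes>\<^bsub>GF r\<^esub> (y \<otimes>\<^bsub>GF r\<^esub> z)"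
      by (simp add: mult.assoc)
  next
    fix x y assume "x \<in> carrier (GF r)" "y \<in> carrier (GF r)"
    show "x \<otimes>\<^bsub>GF r\<^esub> y = y \<otimes>\<^bsub>GF r\<^esub> x" by (simp add: mult.commute)
  next
    fix x assume "x \<in> carrier (GF r)"
    then show "\<one>\<^bsub>GF r\<^esub> \<otimes>\<^bsub>GF r\<^esub> x = x" by auto
  qed auto
  show "\<And>x y z. x \<in> carrier (GF r) \<Longrightarrow> y \<in> carrier (GF r) \<Longrightarrow> z \<in> carrier (GF r) \<Longrightarrow>
        (x \<oplus>\<^bsub>GF r\<^esub> y) \<otimes>\<^bsub>GF r\<^esub> z = x \<otimes>\<^bsub>GF r\<^esub> z \<oplus>\<^bsub>GF r\<^esub> y \<otimes>\<^bsub>GF r\<^esub> z"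
    by (simp add: distrib_right)
qed


lemma nrm_zero_mod:
  assumes r: "prime r" "r mod 4 = 3" and n: "int r dvd nrm x"
  shows "gc r x 0"
proof -
  have oddr: "odd r" using r(2) by presburger
  have noc: "\<not> [c ^ 2 = -1] (mod int r)" for c using minus_one_QR[OF r(1) oddr] r(2) by auto
  define a b where "a = re x" and "b = im x"
  have pr: "prime (int r)" using r(1) by simp
  have bd: "int r dvd b"
  proof (rule ccontr)
    assume "\<not> int r dvd b"
    then have "coprime b (int r)" using prime_imp_coprime[OF pr] by (simp add: coprime_commute)
    then obtain t where t: "[b * t = 1] (mod int r)" using cong_solve_coprime_int by blast
    have "[a ^ 2 + b ^ 2 = 0] (mod int r)" using n by (simp add: nrm_def a_def b_def cong_0_iff)
    then have "[(a ^ 2 + b ^ 2) * t ^ 2 = 0 * t ^ 2] (mod int r)" by (rule cong_mult) simp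
    then have "[(a * t) ^ 2 + (b * t) ^ 2 = 0] (mod int r)" by (simp add: algebra_simps power_mult_distrib)
    moreover have "[(b * t) ^ 2 = 1 ^ 2] (mod int r)" by (rule cong_pow[OF t])
    ultimately have "[(a * t) ^ 2 + 1 = 0] (mod int r)"
      using cong_add[OF cong_refl[of "(a * t) ^ 2"] cong_sym[OF \<open>[(b * t) ^ 2 = 1 ^ 2] (mod int r)\<close>]]
      by (simp add: cong_trans)
    then have "[(a * t) ^ 2 = -1] (mod int r)"
      using cong_diff[OF _ cong_refl[of 1]] by fastforce
    then show False using noc by blast
  qed
  have "int r dvd a ^ 2"
  proof -
    have "int r dvd b ^ 2" using bd by (simp add: power2_eq_square)
    then show ?thesis using n unfolding nrm_def a_def[symmetric] b_def[symmetric]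
      by (metis add_diff_cancel_right' dvd_diff)
  qed
  then have "int r dvd a" using pr prime_dvd_power by blast
  then show ?thesis using bd unfolding gc_def dvd_gi_iff a_def b_def by simp
qed

lemma GF_field:
  assumes r: "prime r" "r mod 4 = 3"
  shows "field (GF r)"
proof -
  interpret cring "GF r" by (rule GF_cring)
  have r1: "r > 1" using prime_gt_1_nat[OF r(1)] .
  have red1: "red r 1 = 1" using r1 by (auto simp: red_def intro: gi_eqI)
  show ?thesis
  proof (rule field_intro2)
    show "\<zero>\<^bsub>GF r\<^esub> \<noteq> \<one>\<^bsub>GF r\<^esub>" using red1 by (simp add: zero_gi_def one_gi_def)
  next
    fix x assume "x \<in> carrier (GF r) - {\<zero>\<^bsub>GF r\<^esub>}"
    then obtain x' where x: "x = red r x'" and x0: "x \<noteq> 0" by auto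
    have "\<not> gc r x 0"
    proof
      assume "gc r x 0"
      then have "red r x = red r 0" by (rule red_gc)
      then show False using x x0 by simp
    qed
    then have "\<not> int r dvd nrm x" using nrm_zero_mod[OF r] by blast
    then have "coprime (nrm x) (int r)"
      using prime_imp_coprime[of "int r" "nrm x"] r(1) by (simp add: coprime_commute)
    then obtain t where t: "[nrm x * t = 1] (mod int r)" using cong_solve_coprime_int by blast
    define y where "y = red r (of_int t * cnj x)"
    have "gc r (x * (of_int t * cnj x)) 1"
    proof -
      have "x * (of_int t * cnj x) = of_int (nrm x * t)" by (simp add: mult_cnj[symmetric] algebra_simps)
      moreover have "gc r (of_int (nrm x * t)) (of_int 1)" using t unfolding gc_of_int .
      ultimately show ?thesis by simp
    qed
    then have xy: "red r (x * y) = 1" unfolding y_def using red_gc red1 by fastforce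
    have "y \<in> carrier (GF r)" unfolding y_def by simp
    moreover have "x \<in> carrier (GF r)" using x by simp
    moreover have "y \<otimes>\<^bsub>GF r\<^esub> x = \<one>\<^bsub>GF r\<^esub>" using xy red1 by (simp add: mult.commute)
    moreover have "x \<otimes>\<^bsub>GF r\<^esub> y = \<one>\<^bsub>GF r\<^esub>" using xy red1 by simp
    ultimately show "x \<in> Units (GF r)" unfolding Units_def by blast
  qed
qed

lemma GF_carrier:
  assumes "r > 0"
  shows "range (red r) = (\<lambda>(a, b). G a b) ` ({0..<int r} \<times> {0..<int r})"
proof
  show "range (red r) \<subseteq> (\<lambda>(a, b). G a b) ` ({0..<int r} \<times> {0..<int r})"
    using assms by (auto simp: red_def image_iff)
  show "(\<lambda>(a, b). G a b) ` ({0..<int r} \<times> {0..<int r}) \<subseteq> range (red r)"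
  proof clarify
    fix a b assume "a \<in> {0..<int r}" "b \<in> {0..<int r}"
    then have "red r (G a b) = G a b" by (simp add: red_def)
    then show "G a b \<in> range (red r)" by (metis rangeI)
  qed
qed

lemma GF_card:
  assumes "r > 0"
  shows "finite (range (red r))" "card (range (red r)) = r * r"
proof -
  have inj: "inj_on (\<lambda>(a, b). G a b) ({0..<int r} \<times> {0..<int r})"
    by (auto simp: inj_on_def)
  show "finite (range (red r))" unfolding GF_carrier[OF assms] by simp
  show "card (range (red r)) = r * r" unfolding GF_carrier[OF assms] card_image[OF inj]
    by (simp add: card_cartesian_product)
qed


lemma GF_pow: "a [^]\<^bsub>GF r\<^esub> (k::nat) = red r (a ^ k)"
  by (induction k) (simp_all add: mult.commute)

lemma GF_gen:
  assumes r: "prime r" "r mod 4 = 3"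
  shows "\<exists>a. a \<in> range (red r) \<and> a \<noteq> 0 \<and> (\<forall>k. gc r (a ^ k) 1 \<longrightarrow> (r * r - 1) dvd k)"
proof -
  interpret F: field "GF r" by (rule GF_field[OF r])
  interpret M: group "mult_of (GF r)" by (rule F.field_mult_group)
  have r1: "r > 1" using prime_gt_1_nat[OF r(1)] .
  have red1: "red r 1 = 1" using r1 by (auto simp: red_def intro: gi_eqI)
  have fin: "finite (carrier (GF r))" using GF_card[of r] r1 by simp
  have cardR: "card (carrier (GF r)) = r * r" using GF_card[of r] r1 by simp
  have finM: "finite (carrier (mult_of (GF r)))" using fin by simp
  have ordM: "order (mult_of (GF r)) = r * r - 1"
    unfolding order_def carrier_mult_of using cardR fin
    by (simp add: card_Diff_singleton_if image_iff) (metis red_zero)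
  obtain a where a: "a \<in> carrier (mult_of (GF r))"
    and gen: "carrier (mult_of (GF r)) = {a [^]\<^bsub>GF r\<^esub> i | i::nat. i \<in> UNIV}"
    using F.finite_field_mult_group_has_gen[OF fin] by blast
  have gen': "carrier (mult_of (GF r)) = {a [^]\<^bsub>mult_of (GF r)\<^esub> i | i::nat. i \<in> UNIV}"
    using gen by (simp add: nat_pow_mult_of)
  have "M.ord a dvd order (mult_of (GF r))" by (rule M.ord_dvd_group_order[OF a])
  moreover have pos: "order (mult_of (GF r)) > 0" using ordM r1
    by (metis One_nat_def Suc_lessI diff_is_0_eq less_one mult_0_right nat_mult_less_cancel_disj not_less_zero zero_less_diff one_less_mult nat_less_le)
  ultimately have ord0: "M.ord a > 0" by (metis dvd_0_left_iff gr0I less_irrefl)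
  have "order (mult_of (GF r)) = card {a [^]\<^bsub>mult_of (GF r)\<^esub> i | i. i \<in> {0 .. M.ord a - 1}}"
    unfolding order_def using M.ord_elems[OF finM a] gen' by simp
  also have "\<dots> \<le> card {0 .. M.ord a - 1}"
  proof -
    have "{a [^]\<^bsub>mult_of (GF r)\<^esub> i | i. i \<in> {0 .. M.ord a - 1}} =
          (\<lambda>i. a [^]\<^bsub>mult_of (GF r)\<^esub> i) ` {0 .. M.ord a - 1}" by auto
    then show ?thesis by (metis card_image_le finite_atLeastAtMost)
  qed
  also have "\<dots> = M.ord a" using ord0 by simp
  finally have "order (mult_of (GF r)) \<le> M.ord a" .
  with \<open>M.ord a dvd order (mult_of (GF r))\<close> pos have ord_eq: "M.ord a = r * r - 1"
    using ordM by (simp add: dvd_imp_le le_antisym)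
  have "(r * r - 1) dvd k" if "gc r (a ^ k) 1" for k
  proof -
    have "red r (a ^ k) = red r 1" using that by (rule red_gc)
    then have "a [^]\<^bsub>GF r\<^esub> k = \<one>\<^bsub>GF r\<^esub>" by (simp add: GF_pow)
    then have "a [^]\<^bsub>mult_of (GF r)\<^esub> k = \<one>\<^bsub>mult_of (GF r)\<^esub>" by (simp add: nat_pow_mult_of)
    then show ?thesis using M.pow_eq_id[OF a] ord_eq by simp
  qed
  moreover have "a \<in> range (red r)" "a \<noteq> 0" using a by auto
  ultimately show ?thesis by blast
qed


lemma key3:
  assumes r: "prime r" "r mod 4 = 3"
  shows "\<exists>Z. coprime (int r) (nrm Z) \<and>
     (\<forall>U m. gc r (U * cnj Z) 1 \<longrightarrow> gc r ((Z * U) ^ m) 1 \<longrightarrow> (r + 1) dvd m)"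
proof -
  have oddr: "odd r" using r(2) by presburger
  have r1: "r > 1" using prime_gt_1_nat[OF r(1)] .
  obtain a where a: "a \<in> range (red r)" "a \<noteq> 0" and ga: "\<And>k. gc r (a ^ k) 1 \<Longrightarrow> (r * r - 1) dvd k"
    using GF_gen[OF r] by blast
  have "\<not> gc r a 0"
  proof
    assume "gc r a 0"
    then have "red r a = red r 0" by (rule red_gc)
    then show False using a by auto
  qed
  then have "\<not> int r dvd nrm a" using nrm_zero_mod[OF r] by blast
  then have cop: "coprime (int r) (nrm a)"
    using prime_imp_coprime[of "int r" "nrm a"] r(1) by simp
  then obtain t where t: "[nrm a * t = 1] (mod int r)"
    using cong_solve_coprime_int[of "nrm a" "int r"] by (auto simp: coprime_commute)
  define V where "V = of_int t * cnj a"
  have aV: "gc r (a * V) 1"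
  proof -
    have "a * V = of_int (nrm a * t)" by (simp add: V_def mult_cnj[symmetric] algebra_simps)
    moreover have "gc r (of_int (nrm a * t)) (of_int 1)" using t unfolding gc_of_int .
    ultimately show ?thesis by simp
  qed
  have frob: "gc r (a ^ r) (cnj a)" by (rule frobenius(2)[OF r(1) oddr r(2)])
  have "(r + 1) dvd m" if U1: "gc r (U * cnj a) 1" and W1: "gc r ((a * U) ^ m) 1" for U m
  proof -
    define X Y C where "X = a ^ m" and "Y = U ^ m" and "C = cnj a ^ m"
    have B: "gc r (Y * C) 1" using gc_one_pow[OF U1, of m] by (simp add: Y_def C_def power_mult_distrib)
    have A: "gc r (X * Y) 1" using W1 by (simp add: X_def Y_def power_mult_distrib)
    have "gc r (X * (Y * C)) (X * 1)" by (intro gc_mult gc_refl B)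
    then have s1: "gc r X (X * Y * C)" by (simp add: gc_sym mult.assoc)
    have "gc r ((X * Y) * C) (1 * C)" by (intro gc_mult gc_refl A)
    then have s2: "gc r (X * Y * C) C" by simp
    have "gc r ((a ^ r) ^ m) (cnj a ^ m)" by (rule gc_pow[OF frob])
    then have s3: "gc r C (a ^ ((r - 1) * m) * X)"
      using r1 by (simp add: C_def X_def gc_sym power_mult[symmetric] power_add[symmetric] algebra_simps
          diff_mult_distrib add_diff_inverse_nat)
    have s4: "gc r X (a ^ ((r - 1) * m) * X)" using gc_trans[OF gc_trans[OF s1 s2] s3] .
    have "gc r (X * V ^ m) (a ^ ((r - 1) * m) * X * V ^ m)" by (intro gc_mult s4 gc_refl)
    moreover have XV: "gc r (X * V ^ m) 1" using gc_one_pow[OF aV, of m] by (simp add: X_def power_mult_distrib)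
    moreover have "gc r (a ^ ((r - 1) * m) * (X * V ^ m)) (a ^ ((r - 1) * m) * 1)"
      by (intro gc_mult gc_refl XV)
    ultimately have "gc r (a ^ ((r - 1) * m)) 1"
      by (metis (no_types, lifting) gc_sym gc_trans mult.assoc mult_1_right)
    then have "(r * r - 1) dvd (r - 1) * m" by (rule ga)
    moreover have "r * r - 1 = (r - 1) * (r + 1)" by (simp add: algebra_simps diff_mult_distrib)
    ultimately have "(r - 1) * (r + 1) dvd (r - 1) * m" by simp
    moreover have pos: "0 < r - 1" using r1 by simp
    ultimately show ?thesis by (simp only: nat_mult_dvd_cancel1[OF pos])
  qed
  then show ?thesis using cop by blast
qed


lemma keyq:
  assumes q: "prime q" "odd q"
  shows "\<exists>Z. coprime (int q) (nrm Z) \<and>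
     (\<forall>U m. gc q (U * cnj Z) 1 \<longrightarrow> gc q ((Z * U) ^ m) 1 \<longrightarrow>
        (if q mod 4 = 1 then q - 1 else q + 1) dvd m)"
proof (cases "q mod 4 = 1")
  case True then show ?thesis using key1[OF q(1) True] by simp
next
  case False
  then have "q mod 4 = 3" using q(2) by presburger
  then show ?thesis using key3[OF q(1)] False by simp
qed

lemma F_mod:
  "n mod 4 = 1 \<Longrightarrow> F n = n - 1" "n mod 4 = 3 \<Longrightarrow> F n = n + 1"
  by (simp_all add: F_def)

lemma pq_mod4: "(p * q) mod 4 = ((p mod 4) * (q mod 4)) mod 4" for p q :: nat
  by (simp add: mod_mult_eq)

lemma arith_nec:
  fixes p q :: nat
  assumes "odd p" "odd q" "p < q" "p \<ge> 3"
    and d: "(if q mod 4 = 1 then q - 1 else q + 1) dvd F (p * q)"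
  shows "q = p + 2 \<and> 8 dvd (p + q)"
proof -
  have p4: "p mod 4 = 1 \<or> p mod 4 = 3" using assms(1) by presburger
  have q4: "q mod 4 = 1 \<or> q mod 4 = 3" using assms(2) by presburger
  have q1: "q \<ge> 1" using assms by simp
  show ?thesis
  proof (cases "q mod 4 = 1")
    case qT: True
    then have "(q - 1) dvd F (p * q)" using d by simp
    then have "int (q - 1) dvd int (F (p * q))" by (simp only: int_dvd_int_iff)
    moreover have "int (q - 1) = int q - 1" using q1 by simp
    ultimately have D: "int q - 1 dvd int (F (p * q))" by simp
    show ?thesis
    proof (cases "p mod 4 = 1")
      case True
      then have "(p * q) mod 4 = 1" using qT by (simp add: pq_mod4)
      then have "int (F (p * q)) = int p * int q - 1" using assms by (simp add: F_mod of_nat_diff)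
      then have "int q - 1 dvd int p * int q - 1" using D by simp
      moreover have "int q - 1 dvd int p * (int q - 1)" by simp
      ultimately have "int q - 1 dvd (int p * (int q - 1)) - (int p * int q - 1)" using dvd_diff by blast
      then have "int q - 1 dvd - (int p - 1)" by (simp add: algebra_simps)
      then have "int q - 1 dvd int p - 1" by (simp only: dvd_minus_iff)
      then have "int q - 1 \<le> int p - 1" using assms by (intro zdvd_imp_le) auto
      then show ?thesis using assms by simp
    next
      case False
      then have pT: "p mod 4 = 3" using p4 by simp
      then have "(p * q) mod 4 = 3" using qT by (simp add: pq_mod4)
      then have "int (F (p * q)) = int p * int q + 1" using assms by (simp add: F_mod)
      then have "int q - 1 dvd int p * int q + 1" using D by simp
      moreover have "int q - 1 dvd int p * (int q - 1)" by simp
      ultimately have "int q - 1 dvd (int p * int q + 1) - (int p * (int q - 1))" using dvd_diff by blast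
      then have "int q - 1 dvd int p + 1" by (simp add: algebra_simps)
      then have "int q - 1 \<le> int p + 1" using assms by (intro zdvd_imp_le) auto
      then have "q = p + 2" using assms(1-3) by presburger
      then show ?thesis using pT by presburger
    qed
  next
    case qF: False
    then have qT: "q mod 4 = 3" using q4 by simp
    have "(q + 1) dvd F (p * q)" using d qF by simp
    then have "int (q + 1) dvd int (F (p * q))" by (simp only: int_dvd_int_iff)
    then have D: "int q + 1 dvd int (F (p * q))" by (simp add: add.commute)
    show ?thesis
    proof (cases "p mod 4 = 1")
      case True
      then have "(p * q) mod 4 = 3" using qT by (simp add: pq_mod4)
      then have "int (F (p * q)) = int p * int q + 1" using assms by (simp add: F_mod)
      then have "int q + 1 dvd int p * int q + 1" using D by simp
      moreover have "int q + 1 dvd int p * (int q + 1)" by simp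
      ultimately have "int q + 1 dvd (int p * (int q + 1)) - (int p * int q + 1)" using dvd_diff by blast
      then have "int q + 1 dvd int p - 1" by (simp add: algebra_simps)
      then have "int q + 1 \<le> int p - 1" using assms by (intro zdvd_imp_le) auto
      then show ?thesis using assms by simp
    next
      case False
      then have pT: "p mod 4 = 3" using p4 by simp
      then have "(p * q) mod 4 = 1" using qT by (simp add: pq_mod4)
      then have "int (F (p * q)) = int p * int q - 1" using assms by (simp add: F_mod of_nat_diff)
      then have "int q + 1 dvd int p * int q - 1" using D by simp
      moreover have "int q + 1 dvd int p * (int q + 1)" by simp
      ultimately have "int q + 1 dvd (int p * (int q + 1)) - (int p * int q - 1)" using dvd_diff by blast
      then have "int q + 1 dvd int p + 1" by (simp add: algebra_simps)
      then have "int q + 1 \<le> int p + 1" using assms by (intro zdvd_imp_le) auto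
      then show ?thesis using assms by simp
    qed
  qed
qed


theorem mainTheorem11:
  fixes p q :: nat
  assumes "prime p" and "prime q" and "odd p" and "odd q" and "p < q"
  shows "gauss_carmichael (p * q) \<longleftrightarrow> q = p + 2 \<and> 8 dvd (p + q)"
proof -
  have p3: "p \<ge> 3" using assms(1,3) prime_gt_1_nat[OF assms(1)] by presburger
  have cpq: "coprime p q" using assms(1,2,5) by (simp add: primes_coprime)
  have comp: "composite (p * q)"
  proof -
    have "p * q \<ge> 3 * 1" using p3 assms(5) by (intro mult_le_mono) auto
    then have "p * q > 1" by simp
    moreover have "\<not> prime (p * q)" using prime_product[of p q] assms(1,2) by auto
    ultimately show ?thesis by (simp add: composite_def)
  qed
  show ?thesis
  proof
    assume GC: "gauss_carmichael (p * q)"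
    obtain Z where Zc: "coprime (int q) (nrm Z)" and ZK: "\<And>U m. gc q (U * cnj Z) 1 \<Longrightarrow> gc q ((Z * U) ^ m) 1 \<Longrightarrow>
        (if q mod 4 = 1 then q - 1 else q + 1) dvd m"
      using keyq[OF assms(2,4)] by blast
    have cqp: "coprime (int q) (int p)" using cpq by (simp add: coprime_commute)
    obtain x1 where x1: "[x1 = re Z] (mod int q)" "[x1 = 1] (mod int p)"
      using binary_chinese_remainder_int[OF cqp] by blast
    obtain x2 where x2: "[x2 = im Z] (mod int q)" "[x2 = 0] (mod int p)"
      using binary_chinese_remainder_int[OF cqp] by blast
    define Z' where "Z' = G x1 x2"
    have gq: "gc q Z' Z" using x1(1) x2(1) unfolding gc_def dvd_gi_iff Z'_def cong_iff_dvd_diff by simp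
    have gp: "gc p Z' 1" using x1(2) x2(2) unfolding gc_def dvd_gi_iff Z'_def cong_iff_dvd_diff by simp
    have "[nrm Z = nrm Z'] (mod int q)" using gc_nrm[OF gq] by (simp add: cong_sym_eq)
    moreover have "coprime (nrm Z) (int q)" using Zc by (simp add: coprime_commute)
    ultimately have c1: "coprime (nrm Z') (int q)" by (rule cong_imp_coprime)
    have "[1 = nrm Z'] (mod int p)" using gc_nrm[OF gp] by (simp add: cong_sym_eq)
    then have c2: "coprime (nrm Z') (int p)" by (rule cong_imp_coprime) simp
    have cop: "coprime (int (p * q)) (gnorm (re Z', im Z'))"
      using c1 c2 by (simp add: toG_norm toG_inv coprime_commute)
    then have "gauss_fermat_psp (p * q) (re Z', im Z')" using GC unfolding gauss_carmichael_def by blast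
    then obtain u where u1: "gcong (p * q) (gmul u (gconj (re Z', im Z'))) gone"
      and u2: "gcong (p * q) (gpow (gmul (re Z', im Z') u) (F (p * q))) gone"
      unfolding gauss_fermat_psp_def by blast
    define U where "U = toG u"
    have U1: "gc (p * q) (U * cnj Z') 1" using u1
      by (simp add: gcong_gc toG_mul toG_conj toG_one toG_inv U_def)
    have U2: "gc (p * q) ((Z' * U) ^ F (p * q)) 1" using u2
      by (simp add: gcong_gc toG_mul toG_pow toG_one toG_inv U_def)
    have U1q: "gc q (U * cnj Z) 1"
    proof -
      have "gc q (U * cnj Z) (U * cnj Z')" by (intro gc_mult gc_refl gc_cnj gc_sym[OF gq])
      moreover have "gc q (U * cnj Z') 1" using gc_dvd[OF _ U1, of q] by simp
      ultimately show ?thesis by (rule gc_trans)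
    qed
    have U2q: "gc q ((Z * U) ^ F (p * q)) 1"
    proof -
      have "gc q ((Z * U) ^ F (p * q)) ((Z' * U) ^ F (p * q))" by (intro gc_pow gc_mult gc_refl gc_sym[OF gq])
      moreover have "gc q ((Z' * U) ^ F (p * q)) 1" using gc_dvd[OF _ U2, of q] by simp
      ultimately show ?thesis by (rule gc_trans)
    qed
    have "(if q mod 4 = 1 then q - 1 else q + 1) dvd F (p * q)" by (rule ZK[OF U1q U2q])
    then show "q = p + 2 \<and> 8 dvd (p + q)" using arith_nec[OF assms(3,4,5) p3] by blast
  next
    assume H: "q = p + 2 \<and> 8 dvd (p + q)"
    then have q2: "q = p + 2" by simp
    have p4: "p mod 4 = 3" using H by presburger
    have q4: "q mod 4 = 1" using p4 q2 by presburger
    have "(p * q) mod 4 = 3" using p4 q4 by (simp add: pq_mod4)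
    then have Fpq: "F (p * q) = (p + 1) ^ 2" using q2 by (simp add: F_mod power2_eq_square algebra_simps)
    show "gauss_carmichael (p * q)"
      unfolding gauss_carmichael_def
    proof (intro conjI allI impI comp)
      fix z assume cz: "coprime (int (p * q)) (gnorm z)"
      then have "coprime (int (p * q)) (nrm (toG z))" by (simp add: toG_norm)
      then obtain U where U1: "gc (p * q) (U * cnj (toG z)) 1"
        and U2: "gc (p * q) ((toG z * U) ^ ((p + 1) ^ 2)) 1"
        using suff_core[OF assms(1) p4 assms(2) q2] by blast
      define u where "u = (re U, im U)"
      have tu: "toG u = U" by (simp add: u_def toG_inv)
      have "gcong (p * q) (gmul u (gconj z)) gone"
        using U1 by (simp add: gcong_gc toG_mul toG_conj toG_one tu)
      moreover have "gcong (p * q) (gpow (gmul z u) (F (p * q))) gone"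
        using U2 by (simp add: gcong_gc toG_mul toG_pow toG_one tu Fpq)
      ultimately show "gauss_fermat_psp (p * q) z"
        unfolding gauss_fermat_psp_def using comp cz by blast
    qed
  qed
qed


end
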